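(* Let $\Gamma$ be a finitely generated group with finite symmetric generating set $S$, $\rho\colon\Gamma\curvearrowright\mathcal H$ an affine action on a Hilbert space and $f\colon\Gamma\to\mathcal H$ a $\rho$-equivariant map. Then for all $x\in\Gamma$, $$\|\Delta Hf(x)\|\le\max_{x'\in x(S\cup\{e\})}\|\Delta f(x')\|,$$ and if equality holds for some $x$, then $\Delta f$ is a constant vector independent of $x\in\Gamma$.
   Context: $f$ is $\rho$-equivariant if $f(\gamma x)=\rho(\gamma)(f(x))$ for all $\gamma,x$. Averaging operator: $Hf(x)=\frac12\big(\frac1{\#S}\sum_{s\in S}f(xs)+f(x)\big)$; Laplacian: $\Delta f=(1-H)f$, i.e. $\Delta f(x)=\frac1{2\#S}\sum_{s\in S}(f(x)-f(xs))$. $x(S\cup\{e\})=\{xs:s\in S\}\cup\{x\}$. *)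

theory Defs
  imports "HOL-Analysis.Analysis" "HOL-Algebra.Generated_Groups"
begin

definition affine_map :: "('h::real_vector \<Rightarrow> 'h) \<Rightarrow> bool" where
  "affine_map T \<longleftrightarrow> (\<exists>L b. linear L \<and> (\<forall>u. T u = L u + b))"

definition affine_action :: "('g, 'm) monoid_scheme \<Rightarrow> ('g \<Rightarrow> 'h::real_vector \<Rightarrow> 'h) \<Rightarrow> bool" where
  "affine_action G \<rho> \<longleftrightarrow>
     (\<forall>\<gamma>\<in>carrier G. affine_map (\<rho> \<gamma>)) \<and>
     \<rho> \<one>\<^bsub>G\<^esub> = id \<and>
     (\<forall>\<gamma>\<in>carrier G. \<forall>\<delta>\<in>carrier G. \<rho> (\<gamma> \<otimes>\<^bsub>G\<^esub> \<delta>) = \<rho> \<gamma> \<circ> \<rho> \<delta>)"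

definition equivariant :: "('g, 'm) monoid_scheme \<Rightarrow> ('g \<Rightarrow> 'h \<Rightarrow> 'h) \<Rightarrow> ('g \<Rightarrow> 'h) \<Rightarrow> bool" where
  "equivariant G \<rho> f \<longleftrightarrow>
     (\<forall>\<gamma>\<in>carrier G. \<forall>x\<in>carrier G. f (\<gamma> \<otimes>\<^bsub>G\<^esub> x) = \<rho> \<gamma> (f x))"

definition avg_op :: "('g, 'm) monoid_scheme \<Rightarrow> 'g set \<Rightarrow> ('g \<Rightarrow> 'h::real_vector) \<Rightarrow> 'g \<Rightarrow> 'h" where
  "avg_op G S f x = (1/2) *\<^sub>R ((1 / real (card S)) *\<^sub>R (\<Sum>s\<in>S. f (x \<otimes>\<^bsub>G\<^esub> s)) + f x)"

definition laplacian :: "('g, 'm) monoid_scheme \<Rightarrow> 'g set \<Rightarrow> ('g \<Rightarrow> 'h::real_vector) \<Rightarrow> 'g \<Rightarrow> 'h" where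
  "laplacian G S f x = f x - avg_op G S f x"

end

theory Submission
  imports Defs
begin

lemma two_point_eq:
  fixes a b :: "'h::real_inner"
  assumes "norm a \<le> M" "norm b \<le> M" "norm ((1/2) *\<^sub>R (a + b)) = M"
  shows "a = b"
proof -
  have M0: "M \<ge> 0" using assms(1) norm_ge_zero order_trans by blast
  have "norm (a - b)^2 + norm (a + b)^2 = 2 * norm a ^2 + 2 * norm b ^2"
    by (simp add: power2_norm_eq_inner inner_simps inner_commute)
  moreover have "norm (a + b) = 2 * M" using assms(3) by simp
  ultimately have e: "norm (a - b)^2 = 2 * norm a ^2 + 2 * norm b ^2 - 4 * M^2"
    by (simp add: power_mult_distrib)
  have "norm a ^2 \<le> M^2" "norm b ^2 \<le> M^2"
    using assms(1,2) by (simp_all add: power_mono)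
  hence "norm (a - b)^2 \<le> 0" using e by linarith
  thus ?thesis by simp
qed

lemma avg_eq:
  fixes v :: "'i \<Rightarrow> 'h::real_inner"
  assumes fin: "finite S" and ne: "S \<noteq> {}" and b: "\<forall>s\<in>S. norm (v s) \<le> M"
    and eq: "norm ((1 / real (card S)) *\<^sub>R (\<Sum>s\<in>S. v s)) = M"
  shows "\<forall>s\<in>S. v s = (1 / real (card S)) *\<^sub>R (\<Sum>s\<in>S. v s)"
proof -
  define n where "n = real (card S)"
  have n0: "n > 0" using fin ne by (simp add: n_def card_gt_0_iff)
  define u where "u = (1 / n) *\<^sub>R (\<Sum>s\<in>S. v s)"
  have su: "(\<Sum>s\<in>S. v s) = n *\<^sub>R u" using n0 by (simp add: u_def)
  have "(\<Sum>s\<in>S. norm (v s - u)^2) = (\<Sum>s\<in>S. norm (v s)^2 - 2 * (v s \<bullet> u) + norm u ^2)"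
    by (intro sum.cong refl) (simp add: power2_norm_eq_inner inner_simps inner_commute)
  also have "\<dots> = (\<Sum>s\<in>S. norm (v s)^2) - 2 * ((\<Sum>s\<in>S. v s) \<bullet> u) + n * norm u ^2"
    by (simp add: sum.distrib sum_subtractf sum_distrib_left inner_sum_left n_def)
  also have "\<dots> = (\<Sum>s\<in>S. norm (v s)^2) - n * norm u ^2"
    by (simp add: su power2_norm_eq_inner)
  also have "\<dots> \<le> n * M^2 - n * M^2"
  proof -
    have "(\<Sum>s\<in>S. norm (v s)^2) \<le> (\<Sum>s\<in>S. M^2)"
      by (intro sum_mono) (simp add: b power_mono)
    moreover have "norm u = M" using eq by (simp add: u_def n_def)
    ultimately show ?thesis by (simp add: n_def)
  qed
  finally have "(\<Sum>s\<in>S. norm (v s - u)^2) \<le> 0" by simp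
  hence "\<forall>s\<in>S. norm (v s - u)^2 = 0"
    using sum_nonneg_eq_0_iff[OF fin] by (smt (verit) sum_nonneg zero_le_power2)
  thus ?thesis by (simp add: u_def n_def)
qed

theorem mainTheorem3:
  fixes G :: "('g, 'm) monoid_scheme"
    and S :: "'g set"
    and \<rho> :: "'g \<Rightarrow> 'h::{real_inner, complete_space} \<Rightarrow> 'h"
    and f :: "'g \<Rightarrow> 'h"
  assumes "group G"
    and "finite S" and "S \<subseteq> carrier G"
    and "\<forall>s\<in>S. inv\<^bsub>G\<^esub> s \<in> S"
    and "generate G S = carrier G"
    and "affine_action G \<rho>"
    and "equivariant G \<rho> f"
  shows "(\<forall>x\<in>carrier G.
            norm (laplacian G S (avg_op G S f) x)
              \<le> Max ((\<lambda>x'. norm (laplacian G S f x')) ` ((\<lambda>s. x \<otimes>\<^bsub>G\<^esub> s) ` (S \<union> {\<one>\<^bsub>G\<^esub>}))))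
       \<and> ((\<exists>x\<in>carrier G.
            norm (laplacian G S (avg_op G S f) x)
              = Max ((\<lambda>x'. norm (laplacian G S f x')) ` ((\<lambda>s. x \<otimes>\<^bsub>G\<^esub> s) ` (S \<union> {\<one>\<^bsub>G\<^esub>}))))
          \<longrightarrow> (\<exists>c. \<forall>y\<in>carrier G. laplacian G S f y = c))"
proof -
  interpret group G by fact
  define D where "D = laplacian G S f"
  define n where "n = real (card S)"
  define A where "A x = (1 / n) *\<^sub>R (\<Sum>s\<in>S. D (x \<otimes>\<^bsub>G\<^esub> s))" for x
  have comm: "laplacian G S (avg_op G S f) x = (1/2) *\<^sub>R (A x + D x)" for x
    by (simp add: laplacian_def avg_op_def A_def D_def n_def scaleR_sum_right[symmetric]
        sum_subtractf algebra_simps)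
  define Mx where "Mx x = Max ((\<lambda>x'. norm (D x')) ` ((\<lambda>s. x \<otimes>\<^bsub>G\<^esub> s) ` (S \<union> {\<one>\<^bsub>G\<^esub>})))" for x
  have fin: "finite ((\<lambda>x'. norm (D x')) ` ((\<lambda>s. x \<otimes>\<^bsub>G\<^esub> s) ` (S \<union> {\<one>\<^bsub>G\<^esub>})))" for x
    using assms(2) by simp
  have bS: "norm (D (x \<otimes>\<^bsub>G\<^esub> s)) \<le> Mx x" if "s \<in> S" for x s
    unfolding Mx_def using that by (intro Max_ge[OF fin]) auto
  have bx: "norm (D x) \<le> Mx x" if "x \<in> carrier G" for x
  proof -
    have "norm (D (x \<otimes>\<^bsub>G\<^esub> \<one>\<^bsub>G\<^esub>)) \<le> Mx x"
      unfolding Mx_def by (intro Max_ge[OF fin]) auto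
    thus ?thesis using that by simp
  qed
  have bA: "norm (A x) \<le> Mx x" for x
  proof (cases "S = {}")
    case True
    then show ?thesis using Max_ge[OF fin[of x], of "norm (D (x \<otimes>\<^bsub>G\<^esub> \<one>\<^bsub>G\<^esub>))"]
      by (simp add: A_def Mx_def)
  next
    case False
    have n0: "n > 0" using False assms(2) by (simp add: n_def card_gt_0_iff)
    have "norm (\<Sum>s\<in>S. D (x \<otimes>\<^bsub>G\<^esub> s)) \<le> (\<Sum>s\<in>S. Mx x)"
      by (rule order_trans[OF norm_sum sum_mono]) (simp add: bS)
    hence "norm (\<Sum>s\<in>S. D (x \<otimes>\<^bsub>G\<^esub> s)) \<le> n * Mx x" by (simp add: n_def)
    thus ?thesis using n0 by (simp add: A_def field_simps)
  qed
  have part1: "norm (laplacian G S (avg_op G S f) x) \<le> Mx x" if "x \<in> carrier G" for x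
  proof -
    have "norm ((1/2) *\<^sub>R (A x + D x)) \<le> (1/2) * (norm (A x) + norm (D x))"
      using norm_triangle_ineq[of "A x" "D x"] by simp
    also have "\<dots> \<le> Mx x" using bA[of x] bx[OF that] by simp
    finally show ?thesis by (simp add: comm)
  qed
  have part2: "\<exists>c. \<forall>y\<in>carrier G. D y = c"
    if x: "x \<in> carrier G" and eqM: "norm (laplacian G S (avg_op G S f) x) = Mx x" for x
  proof -
    have step: "\<forall>s\<in>S. \<forall>y\<in>carrier G. D (y \<otimes>\<^bsub>G\<^esub> s) = D y"
    proof (cases "S = {}")
      case True then show ?thesis by simp
    next
      case False
      have n0: "n > 0" using False assms(2) by (simp add: n_def card_gt_0_iff)
      have AD: "A x = D x"
        by (rule two_point_eq[OF bA bx[OF x]]) (use eqM comm in simp)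
      have "norm (A x) = Mx x" using eqM by (simp add: comm AD)
      hence all: "\<forall>s\<in>S. D (x \<otimes>\<^bsub>G\<^esub> s) = A x"
        using avg_eq[OF assms(2) False, of "\<lambda>s. D (x \<otimes>\<^bsub>G\<^esub> s)" "Mx x"] bS
        by (simp add: A_def n_def)
      have Dform: "D y = (1/2) *\<^sub>R f y - (1 / (2*n)) *\<^sub>R (\<Sum>s\<in>S. f (y \<otimes>\<^bsub>G\<^esub> s))" for y
        by (simp add: D_def laplacian_def avg_op_def n_def algebra_simps)
          (metis scaleR_add_left field_sum_of_halves scaleR_one)
      have equiv: "D (g \<otimes>\<^bsub>G\<^esub> y) = \<rho> g (D y) - \<rho> g 0"
        if g: "g \<in> carrier G" and y: "y \<in> carrier G" for g y
      proof -
        obtain L b where L: "linear L" and Lb: "\<And>u. \<rho> g u = L u + b"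
          using assms(6) g unfolding affine_action_def affine_map_def by blast
        have fe: "f (g \<otimes>\<^bsub>G\<^esub> z) = L (f z) + b" if "z \<in> carrier G" for z
          using assms(7) g that Lb unfolding equivariant_def by simp
        have fs: "f (g \<otimes>\<^bsub>G\<^esub> y \<otimes>\<^bsub>G\<^esub> s) = L (f (y \<otimes>\<^bsub>G\<^esub> s)) + b" if "s \<in> S" for s
          using fe[of "y \<otimes>\<^bsub>G\<^esub> s"] that assms(3) y g by (auto simp: m_assoc)
        have "(\<Sum>s\<in>S. f (g \<otimes>\<^bsub>G\<^esub> y \<otimes>\<^bsub>G\<^esub> s)) = L (\<Sum>s\<in>S. f (y \<otimes>\<^bsub>G\<^esub> s)) + n *\<^sub>R b"
          by (simp add: fs sum.distrib linear_sum[OF L] n_def sum_constant_scaleR)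
        hence "D (g \<otimes>\<^bsub>G\<^esub> y) = (1/2) *\<^sub>R (L (f y) + b) - (1 / (2*n)) *\<^sub>R (L (\<Sum>s\<in>S. f (y \<otimes>\<^bsub>G\<^esub> s)) + n *\<^sub>R b)"
          by (simp add: Dform fe[OF y])
        also have "\<dots> = L (D y)"
          using n0 by (simp add: Dform linear_diff[OF L] linear_scale[OF L] algebra_simps)
        finally show ?thesis using Lb by (simp add: linear_0[OF L])
      qed
      show ?thesis
      proof (intro ballI)
        fix s y assume s: "s \<in> S" and y: "y \<in> carrier G"
        have sc: "s \<in> carrier G" using s assms(3) by auto
        define g where "g = y \<otimes>\<^bsub>G\<^esub> inv\<^bsub>G\<^esub> x"
        have g: "g \<in> carrier G" using x y by (simp add: g_def)
        have gx: "g \<otimes>\<^bsub>G\<^esub> x = y" using x y by (simp add: g_def m_assoc)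
        have "D (y \<otimes>\<^bsub>G\<^esub> s) = D (g \<otimes>\<^bsub>G\<^esub> (x \<otimes>\<^bsub>G\<^esub> s))"
          using x y sc g by (simp add: gx m_assoc[symmetric])
        also have "\<dots> = \<rho> g (D (x \<otimes>\<^bsub>G\<^esub> s)) - \<rho> g 0" using equiv g x sc by simp
        also have "\<dots> = \<rho> g (D x) - \<rho> g 0" using all s AD by simp
        also have "\<dots> = D (g \<otimes>\<^bsub>G\<^esub> x)" using equiv g x by simp
        also have "\<dots> = D y" using gx by simp
        finally show "D (y \<otimes>\<^bsub>G\<^esub> s) = D y" .
      qed
    qed
    have gen: "g \<in> carrier G \<and> (\<forall>y\<in>carrier G. D (y \<otimes>\<^bsub>G\<^esub> g) = D y)" if "g \<in> generate G S" for g
      using that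
    proof induction
      case one then show ?case by simp
    next
      case (incl h) then show ?case using step assms(3) by auto
    next
      case (inv h)
      have hc: "h \<in> carrier G" using inv assms(3) by auto
      show ?case
      proof (intro conjI ballI)
        show "inv\<^bsub>G\<^esub> h \<in> carrier G" using hc by simp
        fix y assume y: "y \<in> carrier G"
        have "D (y \<otimes>\<^bsub>G\<^esub> inv\<^bsub>G\<^esub> h) = D (y \<otimes>\<^bsub>G\<^esub> inv\<^bsub>G\<^esub> h \<otimes>\<^bsub>G\<^esub> h)" using step inv hc y by simp
        also have "\<dots> = D y" using hc y by (simp add: m_assoc)
        finally show "D (y \<otimes>\<^bsub>G\<^esub> inv\<^bsub>G\<^esub> h) = D y" .
      qed
    next
      case (eng h1 h2)
      then show ?case by (auto simp: m_assoc[symmetric])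
    qed
    show ?thesis
    proof (intro exI ballI)
      fix y assume y: "y \<in> carrier G"
      hence "y \<in> generate G S" using assms(5) by simp
      hence "D (\<one>\<^bsub>G\<^esub> \<otimes>\<^bsub>G\<^esub> y) = D \<one>\<^bsub>G\<^esub>" using gen[of y] one_closed by blast
      thus "D y = D \<one>\<^bsub>G\<^esub>" using y by simp
    qed
  qed
  show ?thesis
    using part1 part2 unfolding Mx_def D_def by blast
qed

end
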